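(* Let $2\le n<m$ and let $\lambda$ be any real characteristic matrix on the dual cyclic polytope $C^n(m)^*$. Then there exists an (integral) characteristic matrix $\lambda'$ on $C^n(m)^*$ whose reduction modulo $2$ is $\lambda$. Equivalently, every small cover over $C^n(m)^*$ is (equivariantly homeomorphic to) the fixed point set of the conjugation involution of some quasitoric manifold over $C^n(m)^*$.
   Context: $C^n(m)^*$ is the dual of the cyclic polytope $C^n(m)$ (convex hull in $\mathbb{R}^n$ of $(t_i,\ldots,t_i^n)$, $i=1,\ldots,m$, $t_1<\cdots<t_m$); it is a simple $n$-polytope with facets $F_1,\ldots,F_m$. A characteristic matrix on a simple $n$-polytope $P$ with facets $F_1,\ldots,F_m$ is an integer $n\times m$ matrix $(\boldsymbol\lambda_1,\ldots,\boldsymbol\lambda_m)$ such that whenever $F_{i_1},\ldots,F_{i_n}$ meet at a vertex, $\det(\boldsymbol\lambda_{i_1},\ldots,\boldsymbol\lambda_{i_n})=\pm1$; a real characteristic matrix is defined in the same way with entries in $\mathbb{Z}/2$ and determinant $1$ in $\mathbb{Z}/2$. Quasitoric manifolds (resp. small covers) over $P$ correspond to characteristic (resp. real characteristic) matrices, and the fixed point set of the conjugation involution $[t,q]\mapsto[t^{-1},q]$ on the quasitoric manifold of $\lambda'$ is the small cover of the mod $2$ reduction of $\lambda'$. *)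

theory Defs
  imports Main "HOL-Library.Z2" "Jordan_Normal_Form.Determinant"
begin

text \<open>Indices are 0-based: the points of the cyclic polytope are
  v_i = (t i, t i^2, ..., t i^n) for i < m, and facet F_i of the dual
  polytope corresponds to vertex v_i of C^n(m) and to column i of a matrix.\<close>

text \<open>S (a set of n indices) is the vertex set of a facet of C^n(m):
  there is a hyperplane a.x = b containing exactly the points v_i, i in S,
  with all remaining points strictly on one side. Equivalently, the facets
  F_i (i in S) of the dual polytope meet at a vertex.\<close>
definition cyclic_facet :: "nat \<Rightarrow> nat \<Rightarrow> (nat \<Rightarrow> real) \<Rightarrow> nat set \<Rightarrow> bool" where
  "cyclic_facet n m t S \<longleftrightarrow> S \<subseteq> {..<m} \<and> card S = n \<and>
     (\<exists>(a::nat \<Rightarrow> real) b.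
        (\<forall>i\<in>S. (\<Sum>k=1..n. a k * t i ^ k) = b) \<and>
        (\<forall>i\<in>{..<m} - S. (\<Sum>k=1..n. a k * t i ^ k) < b))"

definition col_submat :: "'a mat \<Rightarrow> nat set \<Rightarrow> 'a mat" where
  "col_submat A S = mat (dim_row A) (card S)
      (\<lambda>(i, k). A $$ (i, sorted_list_of_set S ! k))"

definition char_matrix :: "nat \<Rightarrow> nat \<Rightarrow> (nat \<Rightarrow> real) \<Rightarrow> int mat \<Rightarrow> bool" where
  "char_matrix n m t A \<longleftrightarrow> dim_row A = n \<and> dim_col A = m \<and>
     (\<forall>S. cyclic_facet n m t S \<longrightarrow> det (col_submat A S) \<in> {1, -1})"

definition real_char_matrix :: "nat \<Rightarrow> nat \<Rightarrow> (nat \<Rightarrow> real) \<Rightarrow> bit mat \<Rightarrow> bool" where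
  "real_char_matrix n m t A \<longleftrightarrow> dim_row A = n \<and> dim_col A = m \<and>
     (\<forall>S. cyclic_facet n m t S \<longrightarrow> det (col_submat A S) = 1)"

definition mod2_reduction :: "int mat \<Rightarrow> bit mat" where
  "mod2_reduction A = map_mat of_int A"

end

theory Submission
  imports Defs "HOL-Computational_Algebra.Polynomial"
begin

lemma poly_sum_upto:
  fixes p :: "real poly"
  assumes "degree p \<le> n"
  shows "poly p x = (\<Sum>k\<le>n. coeff p k * x ^ k)"
proof -
  have "poly p x = (\<Sum>k\<le>degree p. coeff p k * x ^ k)" by (rule poly_altdef)
  also have "\<dots> = (\<Sum>k\<le>n. coeff p k * x ^ k)"
    by (rule sum.mono_neutral_left) (use assms in \<open>auto simp: coeff_eq_0\<close>)
  finally show ?thesis .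
qed

lemma gale_even_facet:
  assumes mono: "strict_mono_on {..<m} t" and Ssub: "S \<subseteq> {..<m}" and cardS: "card S = n"
    and ev: "\<forall>j\<in>{..<m}-S. even (card {i\<in>S. j < i})"
  shows "cyclic_facet n m t S"
proof -
  have finS: "finite S" using Ssub finite_subset by blast
  define p where "p = (\<Prod>i\<in>S. [:- t i, 1:])"
  have degp: "degree p \<le> n"
  proof -
    have "degree p \<le> (\<Sum>i\<in>S. degree [:- t i, 1:])" unfolding p_def using degree_prod_sum_le[OF finS, of "\<lambda>i. [:- t i, 1:]"] by (simp add: o_def)
    also have "\<dots> = card S" by simp
    finally show ?thesis using cardS by simp
  qed
  have polyp: "poly p x = (\<Prod>i\<in>S. x - t i)" for x
    unfolding p_def poly_prod by simp
  define a where "a k = - coeff p k" for k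
  define b where "b = coeff p 0"
  have key: "(\<Sum>k=1..n. a k * x ^ k) = b - poly p x" for x
  proof -
    have "poly p x = (\<Sum>k\<le>n. coeff p k * x ^ k)" by (rule poly_sum_upto[OF degp])
    also have "\<dots> = coeff p 0 + (\<Sum>k=1..n. coeff p k * x ^ k)"
    proof -
      have "{..n} = insert 0 {1..n}" by auto
      then show ?thesis by simp
    qed
    finally show ?thesis unfolding a_def b_def by (simp add: sum_negf)
  qed
  have inS: "poly p (t i) = 0" if "i \<in> S" for i
    unfolding polyp using that finS by (auto intro: prod_zero)
  have outS: "poly p (t j) > 0" if j: "j \<in> {..<m} - S" for j
  proof -
    define A where "A = {i\<in>S. i < j}"
    define B where "B = {i\<in>S. j < i}"
    have jm: "j < m" and jS: "j \<notin> S" using j by auto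
    have SAB: "S = A \<union> B" unfolding A_def B_def using jS by (auto, metis linorder_neqE_nat)
    have disj: "A \<inter> B = {}" unfolding A_def B_def by auto
    have finA: "finite A" "finite B" unfolding A_def B_def using finS by auto
    have "(\<Prod>i\<in>S. t j - t i) = (\<Prod>i\<in>A. t j - t i) * (\<Prod>i\<in>B. t j - t i)"
      unfolding SAB by (rule prod.union_disjoint[OF finA disj])
    moreover have "(\<Prod>i\<in>A. t j - t i) > 0"
    proof (rule prod_pos)
      fix i assume "i \<in> A"
      then have "i < j" "i < m" using Ssub jm unfolding A_def by auto
      then have "t i < t j" using mono jm unfolding strict_mono_on_def by auto
      then show "0 < t j - t i" by simp
    qed
    moreover have "(\<Prod>i\<in>B. t j - t i) > 0"
    proof -
      have "(\<Prod>i\<in>B. t j - t i) = (\<Prod>i\<in>B. (-1) * (t i - t j))" by simp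
      also have "\<dots> = (-1) ^ card B * (\<Prod>i\<in>B. t i - t j)"
        by (simp only: prod.distrib prod_constant)
      finally have e1: "(\<Prod>i\<in>B. t j - t i) = (-1) ^ card B * (\<Prod>i\<in>B. t i - t j)" .
      have e2: "(-1::real) ^ card B = 1" using ev j unfolding B_def by simp
      have e3: "(\<Prod>i\<in>B. t i - t j) > 0"
      proof (rule prod_pos)
        fix i assume "i \<in> B"
        then have "j < i" "i < m" using Ssub unfolding B_def by auto
        then have "t j < t i" using mono jm unfolding strict_mono_on_def by auto
        then show "0 < t i - t j" by simp
      qed
      show ?thesis using e1 e2 e3 by simp
    qed
    ultimately show ?thesis unfolding polyp by simp
  qed
  show ?thesis
    unfolding cyclic_facet_def
  proof (intro conjI exI[of _ a] exI[of _ b])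
    show "S \<subseteq> {..<m}" "card S = n" by fact+
    show "\<forall>i\<in>S. (\<Sum>k = 1..n. a k * t i ^ k) = b" using key inS by simp
    show "\<forall>i\<in>{..<m} - S. (\<Sum>k = 1..n. a k * t i ^ k) < b" using key outS by simp
  qed
qed

lemma bezout_family:
  fixes c :: "nat \<Rightarrow> int"
  shows "\<exists>v. \<forall>i<n. (\<Sum>k<n. v k * c k) dvd c i"
proof (induction n)
  case 0 then show ?case by simp
next
  case (Suc n)
  then obtain v where v: "\<forall>i<n. (\<Sum>k<n. v k * c k) dvd c i" by blast
  define s where "s = (\<Sum>k<n. v k * c k)"
  obtain a b where ab: "a * s + b * c n = gcd s (c n)" using bezout_int by blast
  define v' where "v' k = (if k < n then a * v k else b)" for k
  have "(\<Sum>k<Suc n. v' k * c k) = (\<Sum>k<n. v' k * c k) + b * c n"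
    by (simp add: v'_def)
  also have "(\<Sum>k<n. v' k * c k) = a * s"
    unfolding s_def v'_def by (simp add: sum_distrib_left mult.assoc)
  finally have eq: "(\<Sum>k<Suc n. v' k * c k) = gcd s (c n)" using ab by simp
  show ?case
  proof (intro exI[of _ v'] allI impI)
    fix i assume "i < Suc n"
    then consider "i < n" | "i = n" by linarith
    then show "(\<Sum>k<Suc n. v' k * c k) dvd c i"
    proof cases
      case 1
      then have "s dvd c i" using v unfolding s_def by blast
      then show ?thesis unfolding eq by (meson dvd_trans gcd_dvd1)
    next
      case 2 then show ?thesis unfolding eq by simp
    qed
  qed
qed

definition replace_col :: "int mat \<Rightarrow> nat \<Rightarrow> (nat \<Rightarrow> int) \<Rightarrow> int mat" where
  "replace_col Y j w = mat (dim_row Y) (dim_col Y) (\<lambda>(i,k). if k = j then w i else Y $$ (i,k))"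

lemma replace_col_carrier: "Y \<in> carrier_mat n n \<Longrightarrow> replace_col Y j w \<in> carrier_mat n n"
  unfolding replace_col_def by auto

lemma mat_delete_replace_col:
  assumes "Y \<in> carrier_mat n n" "j < n"
  shows "mat_delete (replace_col Y j w) i j = mat_delete Y i j"
  using assms unfolding mat_delete_def replace_col_def
  by (intro eq_matI) auto

lemma det_replace_col:
  assumes Y: "Y \<in> carrier_mat n n" and j: "j < n"
  shows "det (replace_col Y j w) = (\<Sum>i<n. w i * cofactor Y i j)"
proof -
  have "det (replace_col Y j w) = (\<Sum>i<n. replace_col Y j w $$ (i,j) * cofactor (replace_col Y j w) i j)"
    by (rule laplace_expansion_column[OF replace_col_carrier[OF Y] j])
  also have "\<dots> = (\<Sum>i<n. w i * cofactor Y i j)"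
  proof (intro sum.cong refl)
    fix i assume "i \<in> {..<n}"
    then have "replace_col Y j w $$ (i,j) = w i" using Y j unfolding replace_col_def by auto
    moreover have "cofactor (replace_col Y j w) i j = cofactor Y i j"
      unfolding cofactor_def mat_delete_replace_col[OF Y j] ..
    ultimately show "replace_col Y j w $$ (i,j) * cofactor (replace_col Y j w) i j = w i * cofactor Y i j" by simp
  qed
  finally show ?thesis .
qed

lemma of_int_bit: "(of_int k :: bit) = (if even k then 0 else 1)"
proof -
  obtain q r where k: "k = 2 * q + r" and r: "r = k mod 2" by (metis div_mult_mod_eq mult.commute)
  have "(of_int k :: bit) = of_int r" unfolding k by simp
  moreover have "r = 0 \<or> r = 1" using r by auto
  moreover have "even k \<longleftrightarrow> r = 0" using r by (simp add: even_iff_mod_2_eq_zero)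
  ultimately show ?thesis by auto
qed

lemma mod2_replace_col:
  assumes Y: "Y \<in> carrier_mat n n"
  shows "map_mat (of_int :: int \<Rightarrow> bit) (replace_col Y j (\<lambda>i. Y $$ (i,j) + 2 * u i)) = map_mat of_int Y"
  using Y unfolding replace_col_def by (intro eq_matI) auto

lemma all_cofactors_dvd_imp_unit:
  fixes Y :: "int mat"
  assumes Y: "Y \<in> carrier_mat n n" and d: "\<forall>i<n. \<forall>j<n. det Y dvd cofactor Y i j"
    and nz: "det Y \<noteq> 0"
  shows "\<bar>det Y\<bar> = 1"
proof -
  define C where "C = mat n n (\<lambda>(i,j). adj_mat Y $$ (i,j) div det Y)"
  have adjC: "adj_mat Y = det Y \<cdot>\<^sub>m C"
    using Y d unfolding C_def adj_mat_def by (intro eq_matI) auto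
  have C: "C \<in> carrier_mat n n" unfolding C_def by auto
  have "det Y \<cdot>\<^sub>m (Y * C) = det Y \<cdot>\<^sub>m 1\<^sub>m n"
    using adj_mat(2)[OF Y] unfolding adjC mult_smult_distrib[OF Y C] .
  then have "Y * C = 1\<^sub>m n"
  proof -
    assume h: "det Y \<cdot>\<^sub>m (Y * C) = det Y \<cdot>\<^sub>m 1\<^sub>m n"
    show ?thesis
    proof (rule eq_matI)
      fix i j assume ij: "i < dim_row (1\<^sub>m n)" "j < dim_col (1\<^sub>m n)"
      have "(det Y \<cdot>\<^sub>m (Y * C)) $$ (i,j) = (det Y \<cdot>\<^sub>m 1\<^sub>m n) $$ (i,j)" using h by simp
      then show "(Y * C) $$ (i,j) = 1\<^sub>m n $$ (i,j)" using ij Y C nz by simp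
    qed (use Y C in auto)
  qed
  then have "det Y * det C = 1" using det_mult[OF Y C] by simp
  then show ?thesis using zmult_eq_1_iff by fastforce
qed

lemma unimodular_lift_aux:
  "\<forall>Y. Y \<in> carrier_mat n n \<longrightarrow> nat \<bar>det Y\<bar> = d \<longrightarrow> odd (det Y) \<longrightarrow>
     (\<exists>U. U \<in> carrier_mat n n \<and> \<bar>det U\<bar> = 1 \<and> map_mat (of_int :: int \<Rightarrow> bit) U = map_mat of_int Y)"
proof (induction d rule: less_induct)
  case (less d)
  show ?case
  proof (intro allI impI)
    fix Y :: "int mat"
    assume Y: "Y \<in> carrier_mat n n" and dY: "nat \<bar>det Y\<bar> = d" and odd: "odd (det Y)"
    have nz: "det Y \<noteq> 0" using odd by auto
    show "\<exists>U. U \<in> carrier_mat n n \<and> \<bar>det U\<bar> = 1 \<and> map_mat (of_int :: int \<Rightarrow> bit) U = map_mat of_int Y"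
    proof (cases "\<bar>det Y\<bar> = 1")
      case True then show ?thesis using Y by blast
    next
      case False
      have "\<exists>j<n. \<exists>v. (\<forall>i<n. (\<Sum>k<n. v k * cofactor Y k j) dvd cofactor Y i j) \<and>
                 \<bar>\<Sum>k<n. v k * cofactor Y k j\<bar> < \<bar>det Y\<bar>"
      proof (rule ccontr)
        assume contra: "\<not> ?thesis"
        have "\<forall>i<n. \<forall>j<n. det Y dvd cofactor Y i j"
        proof (intro allI impI)
          fix i j assume i: "i < n" and j: "j < n"
          obtain v where v: "\<forall>i<n. (\<Sum>k<n. v k * cofactor Y k j) dvd cofactor Y i j"
            using bezout_family[of n "\<lambda>k. cofactor Y k j"] by blast
          define s where "s = (\<Sum>k<n. v k * cofactor Y k j)"
          have sdet: "s dvd det Y"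
            unfolding laplace_expansion_column[OF Y j] using v unfolding s_def
            by (intro dvd_sum) auto
          have "\<not> \<bar>s\<bar> < \<bar>det Y\<bar>" using contra j v unfolding s_def by blast
          moreover have "\<bar>s\<bar> \<le> \<bar>det Y\<bar>" using sdet nz by (simp add: dvd_imp_le_int)
          ultimately have "\<bar>s\<bar> = \<bar>det Y\<bar>" by simp
          then have "det Y dvd s" by (metis abs_dvd_iff dvd_refl)
          then show "det Y dvd cofactor Y i j" using v i unfolding s_def by (meson dvd_trans)
        qed
        then have "\<bar>det Y\<bar> = 1" by (rule all_cofactors_dvd_imp_unit[OF Y _ nz])
        then show False using False by simp
      qed
      then obtain j v where j: "j < n"
        and v: "\<forall>i<n. (\<Sum>k<n. v k * cofactor Y k j) dvd cofactor Y i j"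
        and lt: "\<bar>\<Sum>k<n. v k * cofactor Y k j\<bar> < \<bar>det Y\<bar>" by blast
      define g where "g = (\<Sum>k<n. v k * cofactor Y k j)"
      have gdet: "g dvd det Y"
        unfolding laplace_expansion_column[OF Y j] using v unfolding g_def
        by (intro dvd_sum) auto
      then obtain q where q: "det Y = g * q" by blast
      have oddq: "odd q" using odd q by simp
      define k where "k = (1 - q) div 2"
      have qk: "q + 2 * k = 1" unfolding k_def using oddq by (simp add: odd_two_times_div_two_succ)
      define Y' where "Y' = replace_col Y j (\<lambda>i. Y $$ (i,j) + 2 * (k * v i))"
      have Y': "Y' \<in> carrier_mat n n" unfolding Y'_def by (rule replace_col_carrier[OF Y])
      have "det Y' = (\<Sum>i<n. (Y $$ (i,j) + 2 * (k * v i)) * cofactor Y i j)"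
        unfolding Y'_def by (rule det_replace_col[OF Y j])
      also have "\<dots> = (\<Sum>i<n. Y $$ (i,j) * cofactor Y i j) + 2 * k * g"
        unfolding g_def by (simp add: distrib_right sum.distrib sum_distrib_left mult.assoc)
      also have "(\<Sum>i<n. Y $$ (i,j) * cofactor Y i j) = det Y"
        by (rule laplace_expansion_column[OF Y j, symmetric])
      finally have "det Y' = g * (q + 2 * k)" using q by (simp add: algebra_simps)
      then have dY': "det Y' = g" using qk by simp
      have oddg: "odd g" using odd q by simp
      have "nat \<bar>det Y'\<bar> < d" using lt dY' dY unfolding g_def by simp
      then obtain U where U: "U \<in> carrier_mat n n" "\<bar>det U\<bar> = 1"
        "map_mat (of_int :: int \<Rightarrow> bit) U = map_mat of_int Y'"
        using less.IH Y' dY' oddg by blast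
      moreover have "map_mat (of_int :: int \<Rightarrow> bit) Y' = map_mat of_int Y"
        unfolding Y'_def by (rule mod2_replace_col[OF Y])
      ultimately show ?thesis by metis
    qed
  qed
qed

lemma unimodular_lift:
  fixes X :: "bit mat"
  assumes X: "X \<in> carrier_mat n n" and dX: "det X = 1"
  shows "\<exists>U. U \<in> carrier_mat n n \<and> \<bar>det U\<bar> = 1 \<and> map_mat of_int U = X"
proof -
  define Y :: "int mat" where "Y = map_mat (\<lambda>b. if b = 1 then 1 else 0) X"
  have Y: "Y \<in> carrier_mat n n" using X unfolding Y_def by auto
  have mY: "map_mat of_int Y = X" using X unfolding Y_def
    by (intro eq_matI) auto
  have "of_int (det Y) = (1::bit)" using of_int_hom.hom_det[of Y] mY dX by metis
  then have "odd (det Y)" unfolding of_int_bit by (auto split: if_splits)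
  then show ?thesis using unimodular_lift_aux[of n] Y mY by blast
qed

lemma md:
  "i' < dim_row A - 1 \<Longrightarrow> j' < dim_col A - 1 \<Longrightarrow>
   mat_delete A i j $$ (i',j') = A $$ (if i' < i then i' else Suc i', if j' < j then j' else Suc j')"
  unfolding mat_delete_def by simp

lemma det2:
  fixes A :: "'a::comm_ring_1 mat"
  assumes A: "A \<in> carrier_mat 2 2"
  shows "det A = A $$ (0,0) * A $$ (1,1) - A $$ (0,1) * A $$ (1,0)"
proof -
  have d: "det (mat_delete A i 0) = (mat_delete A i 0) $$ (0,0)" for i
    by (rule det_single) (use A in \<open>auto intro!: mat_delete_carrier\<close>)
  have "det A = (\<Sum>i<2. A $$ (i,0) * cofactor A i 0)"
    by (rule laplace_expansion_column[OF A]) simp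
  also have "\<dots> = A $$ (0,0) * A $$ (1,1) - A $$ (0,1) * A $$ (1,0)"
    using A by (simp add: numeral_2_eq_2 cofactor_def d md)
  finally show ?thesis .
qed

lemma det3:
  fixes A :: "'a::comm_ring_1 mat"
  assumes A: "A \<in> carrier_mat 3 3"
  shows "det A = A $$ (0,0) * (A $$ (1,1) * A $$ (2,2) - A $$ (1,2) * A $$ (2,1))
               - A $$ (1,0) * (A $$ (0,1) * A $$ (2,2) - A $$ (0,2) * A $$ (2,1))
               + A $$ (2,0) * (A $$ (0,1) * A $$ (1,2) - A $$ (0,2) * A $$ (1,1))"
proof -
  have c: "mat_delete A i 0 \<in> carrier_mat 2 2" for i
    using mat_delete_carrier[OF A] by simp
  have "det A = (\<Sum>i<3. A $$ (i,0) * cofactor A i 0)"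
    by (rule laplace_expansion_column[OF A]) simp
  also have "\<dots> = A $$ (0,0) * (A $$ (1,1) * A $$ (2,2) - A $$ (1,2) * A $$ (2,1))
               - A $$ (1,0) * (A $$ (0,1) * A $$ (2,2) - A $$ (0,2) * A $$ (2,1))
               + A $$ (2,0) * (A $$ (0,1) * A $$ (1,2) - A $$ (0,2) * A $$ (1,1))"
    using A by (simp add: numeral_3_eq_3 numeral_2_eq_2 cofactor_def det2[OF c] md algebra_simps)
  finally show ?thesis .
qed

lemma det_small01:
  fixes M :: "int mat"
  assumes M: "M \<in> carrier_mat n n" and n: "n \<le> 3"
    and e: "\<forall>i<n. \<forall>j<n. M $$ (i,j) \<in> {0,1}"
  shows "\<bar>det M\<bar> \<le> 2"
proof -
  consider "n = 0" | "n = 1" | "n = 2" | "n = 3" using n by linarith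
  then show ?thesis
  proof cases
    case 1 then show ?thesis using M by simp
  next
    case 2 then show ?thesis using M e det_single[of M] by fastforce
  next
    case 3
    then have M2: "M \<in> carrier_mat 2 2" using M by simp
    have "M $$ (0,0) \<in> {0,1}" "M $$ (0,1) \<in> {0,1}" "M $$ (1,0) \<in> {0,1}" "M $$ (1,1) \<in> {0,1}"
      using e 3 by auto
    then show ?thesis unfolding det2[OF M2] by auto
  next
    case 4
    then have M3: "M \<in> carrier_mat 3 3" using M by simp
    have "M $$ (0,0) \<in> {0,1}" "M $$ (0,1) \<in> {0,1}" "M $$ (0,2) \<in> {0,1}"
      "M $$ (1,0) \<in> {0,1}" "M $$ (1,1) \<in> {0,1}" "M $$ (1,2) \<in> {0,1}"
      "M $$ (2,0) \<in> {0,1}" "M $$ (2,1) \<in> {0,1}" "M $$ (2,2) \<in> {0,1}"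
      using e 4 by auto
    then show ?thesis unfolding det3[OF M3] by auto
  qed
qed

definition sparse_col :: "int mat \<Rightarrow> nat \<Rightarrow> nat \<Rightarrow> bool" where
  "sparse_col M n j \<longleftrightarrow> (\<forall>i<n. \<forall>i'<n. M $$ (i,j) \<noteq> 0 \<longrightarrow> M $$ (i',j) \<noteq> 0 \<longrightarrow> i = i')"

lemma det_sparse_bound_aux:
  "\<forall>M. M \<in> carrier_mat n n \<longrightarrow> (\<forall>i<n. \<forall>j<n. M $$ (i,j) \<in> {0,1}) \<longrightarrow>
      card {j. j < n \<and> \<not> sparse_col M n j} \<le> 3 \<longrightarrow> \<bar>det M\<bar> \<le> 2"
proof (induction n)
  case 0 then show ?case by simp
next
  case (Suc n)
  show ?case
  proof (intro allI impI)
    fix M :: "int mat"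
    assume M: "M \<in> carrier_mat (Suc n) (Suc n)" and e: "\<forall>i<Suc n. \<forall>j<Suc n. M $$ (i,j) \<in> {0,1}"
      and c: "card {j. j < Suc n \<and> \<not> sparse_col M (Suc n) j} \<le> 3"
    show "\<bar>det M\<bar> \<le> 2"
    proof (cases "\<exists>j<Suc n. sparse_col M (Suc n) j")
      case False
      then have "{j. j < Suc n \<and> \<not> sparse_col M (Suc n) j} = {..<Suc n}" by auto
      then have "Suc n \<le> 3" using c by simp
      then show ?thesis using det_small01[OF M _ e] by simp
    next
      case True
      then obtain j where j: "j < Suc n" and sp: "sparse_col M (Suc n) j" by blast
      show ?thesis
      proof (cases "\<forall>i<Suc n. M $$ (i,j) = 0")
        case True
        then have "det M = 0" unfolding laplace_expansion_column[OF M j] by simp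
        then show ?thesis by simp
      next
        case False
        then obtain r where r: "r < Suc n" and Mr: "M $$ (r,j) \<noteq> 0" by blast
        have Mr1: "M $$ (r,j) = 1" using e r j Mr by auto
        have other: "M $$ (i,j) = 0" if "i < Suc n" "i \<noteq> r" for i
          using sp that r Mr unfolding sparse_col_def by blast
        define D where "D = mat_delete M r j"
        have D: "D \<in> carrier_mat n n" unfolding D_def using mat_delete_carrier[OF M] by simp
        have "det M = (\<Sum>i<Suc n. M $$ (i,j) * cofactor M i j)"
          by (rule laplace_expansion_column[OF M j])
        also have "\<dots> = M $$ (r,j) * cofactor M r j"
          by (rule sum.remove[where x = r, THEN trans]) (use r other in auto)
        finally have "det M = (-1)^(r+j) * det D" using Mr1 unfolding D_def cofactor_def by simp
        then have absd: "\<bar>det M\<bar> = \<bar>det D\<bar>" by (simp add: abs_mult)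
        define ins where "ins a = (if a < j then a else Suc a)" for a
        define insr where "insr a = (if a < r then a else Suc a)" for a
        have Dent: "D $$ (a,b) = M $$ (insr a, ins b)" if "a < n" "b < n" for a b
          unfolding D_def ins_def insr_def using that M by (simp add: md)
        have insr_lt: "insr a < Suc n" if "a < n" for a using that unfolding insr_def by auto
        have ins_lt: "ins a < Suc n" if "a < n" for a using that unfolding ins_def by auto
        have insr_inj: "insr a = insr b \<Longrightarrow> a = b" for a b unfolding insr_def by (auto split: if_splits)
        have ins_inj: "inj_on ins UNIV" unfolding ins_def inj_on_def by (auto split: if_splits)
        have eD: "\<forall>a<n. \<forall>b<n. D $$ (a,b) \<in> {0,1}" using Dent e insr_lt ins_lt by simp
        have sub: "ins ` {b. b < n \<and> \<not> sparse_col D n b} \<subseteq> {j. j < Suc n \<and> \<not> sparse_col M (Suc n) j}"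
        proof
          fix x assume "x \<in> ins ` {b. b < n \<and> \<not> sparse_col D n b}"
          then obtain b where b: "b < n" "\<not> sparse_col D n b" and x: "x = ins b" by blast
          then obtain a1 a2 where a: "a1 < n" "a2 < n" "D $$ (a1,b) \<noteq> 0" "D $$ (a2,b) \<noteq> 0" "a1 \<noteq> a2"
            unfolding sparse_col_def by blast
          then have "M $$ (insr a1, x) \<noteq> 0" "M $$ (insr a2, x) \<noteq> 0" "insr a1 \<noteq> insr a2"
            using Dent b x insr_inj by auto
          then have "\<not> sparse_col M (Suc n) x" unfolding sparse_col_def using insr_lt a by blast
          then show "x \<in> {j. j < Suc n \<and> \<not> sparse_col M (Suc n) j}" using ins_lt b x by simp
        qed
        have "card {b. b < n \<and> \<not> sparse_col D n b} \<le> card {j. j < Suc n \<and> \<not> sparse_col M (Suc n) j}"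
          by (rule card_inj_on_le[OF _ sub]) (use ins_inj in \<open>auto simp: inj_on_def\<close>)
        then have "\<bar>det D\<bar> \<le> 2" using Suc.IH D eD c by simp
        then show ?thesis using absd by simp
      qed
    qed
  qed
qed

lemma det4:
  fixes A :: "'a::comm_ring_1 mat"
  assumes A: "A \<in> carrier_mat 4 4"
  shows "det A = A $$ (0,0) * (A $$ (1,1) * (A $$ (2,2) * A $$ (3,3) - A $$ (2,3) * A $$ (3,2)) - A $$ (2,1) * (A $$ (1,2) * A $$ (3,3) - A $$ (1,3) * A $$ (3,2)) + A $$ (3,1) * (A $$ (1,2) * A $$ (2,3) - A $$ (1,3) * A $$ (2,2)))
   - A $$ (1,0) * (A $$ (0,1) * (A $$ (2,2) * A $$ (3,3) - A $$ (2,3) * A $$ (3,2)) - A $$ (2,1) * (A $$ (0,2) * A $$ (3,3) - A $$ (0,3) * A $$ (3,2)) + A $$ (3,1) * (A $$ (0,2) * A $$ (2,3) - A $$ (0,3) * A $$ (2,2)))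
   + A $$ (2,0) * (A $$ (0,1) * (A $$ (1,2) * A $$ (3,3) - A $$ (1,3) * A $$ (3,2)) - A $$ (1,1) * (A $$ (0,2) * A $$ (3,3) - A $$ (0,3) * A $$ (3,2)) + A $$ (3,1) * (A $$ (0,2) * A $$ (1,3) - A $$ (0,3) * A $$ (1,2)))
   - A $$ (3,0) * (A $$ (0,1) * (A $$ (1,2) * A $$ (2,3) - A $$ (1,3) * A $$ (2,2)) - A $$ (1,1) * (A $$ (0,2) * A $$ (2,3) - A $$ (0,3) * A $$ (2,2)) + A $$ (2,1) * (A $$ (0,2) * A $$ (1,3) - A $$ (0,3) * A $$ (1,2)))"
proof -
  have c: "mat_delete A i 0 \<in> carrier_mat 3 3" for i
    using mat_delete_carrier[OF A] by simp
  have "det A = (\<Sum>i<4. A $$ (i,0) * cofactor A i 0)"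
    by (rule laplace_expansion_column[OF A]) simp
  also have "\<dots> = A $$ (0,0) * (A $$ (1,1) * (A $$ (2,2) * A $$ (3,3) - A $$ (2,3) * A $$ (3,2)) - A $$ (2,1) * (A $$ (1,2) * A $$ (3,3) - A $$ (1,3) * A $$ (3,2)) + A $$ (3,1) * (A $$ (1,2) * A $$ (2,3) - A $$ (1,3) * A $$ (2,2)))
   - A $$ (1,0) * (A $$ (0,1) * (A $$ (2,2) * A $$ (3,3) - A $$ (2,3) * A $$ (3,2)) - A $$ (2,1) * (A $$ (0,2) * A $$ (3,3) - A $$ (0,3) * A $$ (3,2)) + A $$ (3,1) * (A $$ (0,2) * A $$ (2,3) - A $$ (0,3) * A $$ (2,2)))
   + A $$ (2,0) * (A $$ (0,1) * (A $$ (1,2) * A $$ (3,3) - A $$ (1,3) * A $$ (3,2)) - A $$ (1,1) * (A $$ (0,2) * A $$ (3,3) - A $$ (0,3) * A $$ (3,2)) + A $$ (3,1) * (A $$ (0,2) * A $$ (1,3) - A $$ (0,3) * A $$ (1,2)))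
   - A $$ (3,0) * (A $$ (0,1) * (A $$ (1,2) * A $$ (2,3) - A $$ (1,3) * A $$ (2,2)) - A $$ (1,1) * (A $$ (0,2) * A $$ (2,3) - A $$ (0,3) * A $$ (2,2)) + A $$ (2,1) * (A $$ (0,2) * A $$ (1,3) - A $$ (0,3) * A $$ (1,2)))"
    using A by (simp add: numeral_3_eq_3 numeral_2_eq_2 eval_nat_numeral cofactor_def det3[OF c] md algebra_simps)
  finally show ?thesis .
qed

definition locm :: "(nat \<Rightarrow> nat \<Rightarrow> bit) \<Rightarrow> nat list \<Rightarrow> bit mat" where
  "locm q T = mat 4 4 (\<lambda>(r,c). if T ! c < 4 then (if r = T ! c then 1 else 0) else q r (T ! c - 4))"

lemma sat_core:
  fixes q :: "nat \<Rightarrow> nat \<Rightarrow> bit"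
  assumes hT: "\<forall>T\<in>set [[0,1,3,4], [0,1,4,5], [0,1,5,6], [0,1,6,7], [1,2,3,4], [1,2,4,5], [1,2,5,6], [1,2,6,7], [2,3,4,5], [2,3,5,6], [2,3,6,7], [3,4,5,6], [3,4,6,7], [4,5,6,7]]. det (locm q T) = 1"
  shows False
proof -
  have h: "det (locm q T) = 1" if "T \<in> set [[0,1,3,4], [0,1,4,5], [0,1,5,6], [0,1,6,7], [1,2,3,4], [1,2,4,5], [1,2,5,6], [1,2,6,7], [2,3,4,5], [2,3,5,6], [2,3,6,7], [3,4,5,6], [3,4,6,7], [4,5,6,7]]" for T using hT that by blast
  have f0: "q 2 0 = 1"
    using h[of "[0,1,3,4]"] by (simp add: det4 locm_def)
  have f1: "(q 2 0 = 1 \<and> q 3 (Suc 0) = 1) = (q 2 (Suc 0) = 0 \<or> q 3 0 = 0)"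
    using h[of "[0,1,4,5]"] by (simp add: det4 locm_def)
  have f2: "(q 2 (Suc 0) = 1 \<and> q 3 2 = 1) = (q 2 2 = 0 \<or> q 3 (Suc 0) = 0)"
    using h[of "[0,1,5,6]"] by (simp add: det4 locm_def)
  have f3: "(q 2 2 = 1 \<and> q 3 3 = 1) = (q 2 3 = 0 \<or> q 3 2 = 0)"
    using h[of "[0,1,6,7]"] by (simp add: det4 locm_def)
  have f4: "q 0 0 = 1"
    using h[of "[1,2,3,4]"] by (simp add: det4 locm_def)
  have f5: "(q 0 0 = 1 \<and> q 3 (Suc 0) = 1) = (q 0 (Suc 0) = 0 \<or> q 3 0 = 0)"
    using h[of "[1,2,4,5]"] by (simp add: det4 locm_def)
  have f6: "(q 0 (Suc 0) = 1 \<and> q 3 2 = 1) = (q 0 2 = 0 \<or> q 3 (Suc 0) = 0)"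
    using h[of "[1,2,5,6]"] by (simp add: det4 locm_def)
  have f7: "(q 0 2 = 1 \<and> q 3 3 = 1) = (q 0 3 = 0 \<or> q 3 2 = 0)"
    using h[of "[1,2,6,7]"] by (simp add: det4 locm_def)
  have f8: "(q 0 0 = 1 \<and> q (Suc 0) (Suc 0) = 1) = (q 0 (Suc 0) = 0 \<or> q (Suc 0) 0 = 0)"
    using h[of "[2,3,4,5]"] by (simp add: det4 locm_def)
  have f9: "(q 0 (Suc 0) = 1 \<and> q (Suc 0) 2 = 1) = (q 0 2 = 0 \<or> q (Suc 0) (Suc 0) = 0)"
    using h[of "[2,3,5,6]"] by (simp add: det4 locm_def)
  have f10: "(q 0 2 = 1 \<and> q (Suc 0) 3 = 1) = (q 0 3 = 0 \<or> q (Suc 0) 2 = 0)"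
    using h[of "[2,3,6,7]"] by (simp add: det4 locm_def)
  have f11: "((q 0 0 = 1 \<and> (q (Suc 0) (Suc 0) = 1 \<and> q 2 2 = 1) = (q (Suc 0) 2 = 0 \<or> q 2 (Suc 0) = 0)) = (q (Suc 0) 0 = 0 \<or> (q 0 (Suc 0) = 1 \<and> q 2 2 = 1) = (q 0 2 = 1 \<and> q 2 (Suc 0) = 1))) = (q 2 0 = 0 \<or> (q 0 (Suc 0) = 1 \<and> q (Suc 0) 2 = 1) = (q 0 2 = 1 \<and> q (Suc 0) (Suc 0) = 1))"
    using h[of "[3,4,5,6]"] by (simp add: det4 locm_def)
  have f12: "((q 0 0 = 1 \<and> (q (Suc 0) 2 = 1 \<and> q 2 3 = 1) = (q (Suc 0) 3 = 0 \<or> q 2 2 = 0)) = (q (Suc 0) 0 = 0 \<or> (q 0 2 = 1 \<and> q 2 3 = 1) = (q 0 3 = 1 \<and> q 2 2 = 1))) = (q 2 0 = 0 \<or> (q 0 2 = 1 \<and> q (Suc 0) 3 = 1) = (q 0 3 = 1 \<and> q (Suc 0) 2 = 1))"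
    using h[of "[3,4,6,7]"] by (simp add: det4 locm_def)
  have f13: "(((q 0 0 = 1 \<and> ((q (Suc 0) (Suc 0) = 1 \<and> (q 2 2 = 1 \<and> q 3 3 = 1) = (q 2 3 = 0 \<or> q 3 2 = 0)) = (q 2 (Suc 0) = 0 \<or> (q (Suc 0) 2 = 1 \<and> q 3 3 = 1) = (q (Suc 0) 3 = 1 \<and> q 3 2 = 1))) = (q 3 (Suc 0) = 0 \<or> (q (Suc 0) 2 = 1 \<and> q 2 3 = 1) = (q (Suc 0) 3 = 1 \<and> q 2 2 = 1))) = (q (Suc 0) 0 = 0 \<or> ((q 0 (Suc 0) = 1 \<and> (q 2 2 = 1 \<and> q 3 3 = 1) = (q 2 3 = 0 \<or> q 3 2 = 0)) = (q 2 (Suc 0) = 0 \<or> (q 0 2 = 1 \<and> q 3 3 = 1) = (q 0 3 = 1 \<and> q 3 2 = 1))) = (q 3 (Suc 0) = 1 \<and> (q 0 2 = 1 \<and> q 2 3 = 1) = (q 0 3 = 0 \<or> q 2 2 = 0)))) = (q 2 0 = 0 \<or> ((q 0 (Suc 0) = 1 \<and> (q (Suc 0) 2 = 1 \<and> q 3 3 = 1) = (q (Suc 0) 3 = 0 \<or> q 3 2 = 0)) = (q (Suc 0) (Suc 0) = 0 \<or> (q 0 2 = 1 \<and> q 3 3 = 1) = (q 0 3 = 1 \<and> q 3 2 = 1))) = (q 3 (Suc 0) = 1 \<and> (q 0 2 = 1 \<and> q (Suc 0) 3 = 1) = (q 0 3 = 0 \<or> q (Suc 0) 2 = 0)))) =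 (q 3 0 = 0 \<or> ((q 0 (Suc 0) = 1 \<and> (q (Suc 0) 2 = 1 \<and> q 2 3 = 1) = (q (Suc 0) 3 = 0 \<or> q 2 2 = 0)) = (q (Suc 0) (Suc 0) = 0 \<or> (q 0 2 = 1 \<and> q 2 3 = 1) = (q 0 3 = 1 \<and> q 2 2 = 1))) = (q 2 (Suc 0) = 1 \<and> (q 0 2 = 1 \<and> q (Suc 0) 3 = 1) = (q 0 3 = 0 \<or> q (Suc 0) 2 = 0)))"
    using h[of "[4,5,6,7]"] by (simp add: det4 locm_def)
  show False using f0 f1 f2 f3 f4 f5 f6 f7 f8 f9 f10 f11 f12 f13
    by (cases "q 2 0"; simp?; cases "q 3 0"; simp?; cases "q 0 0"; simp?; cases "q (Suc 0) 0"; simp?; cases "q 2 (Suc 0)"; simp?; cases "q 3 (Suc 0)"; simp?; cases "q 0 (Suc 0)"; simp?; cases "q (Suc 0) (Suc 0)"; simp?; cases "q 2 2"; simp?; cases "q 3 2"; simp?; cases "q 0 2"; simp?; cases "q (Suc 0) 2"; simp?; cases "q 2 3"; simp?; cases "q 3 3"; simp?; cases "q 0 3"; simp?; cases "q (Suc 0) 3"; simp?)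
qed

lemma facet_pairs:
  assumes mono: "strict_mono_on {..<m} t" and n: "n = p + 4"
    and pa: "p \<le> a" and ab: "Suc a < b" and bm: "Suc b < m"
  shows "cyclic_facet n m t ({..<p} \<union> {a, Suc a, b, Suc b})"
proof (rule gale_even_facet[OF mono])
  show "{..<p} \<union> {a, Suc a, b, Suc b} \<subseteq> {..<m}" using pa ab bm by auto
  show "card ({..<p} \<union> {a, Suc a, b, Suc b}) = n"
    using pa ab n by (subst card_Un_disjoint) auto
  show "\<forall>j\<in>{..<m} - ({..<p} \<union> {a, Suc a, b, Suc b}). even (card {i \<in> {..<p} \<union> {a, Suc a, b, Suc b}. j < i})"
  proof
    fix j assume j: "j \<in> {..<m} - ({..<p} \<union> {a, Suc a, b, Suc b})"
    then have jp: "p \<le> j" and ja: "j \<noteq> a" "j \<noteq> Suc a" "j \<noteq> b" "j \<noteq> Suc b" by auto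
    have eq: "{i \<in> {..<p} \<union> {a, Suc a, b, Suc b}. j < i} = {i \<in> {a, Suc a, b, Suc b}. j < i}"
      using jp by auto
    consider "j < a" | "Suc a < j \<and> j < b" | "Suc b < j" using ja by linarith
    then show "even (card {i \<in> {..<p} \<union> {a, Suc a, b, Suc b}. j < i})"
    proof cases
      case 1
      then have e: "{i \<in> {a, Suc a, b, Suc b}. j < i} = {a, Suc a, b, Suc b}" using ab by auto
      show ?thesis unfolding eq e using ab by simp
    next
      case 2
      then have e: "{i \<in> {a, Suc a, b, Suc b}. j < i} = {b, Suc b}" using ab by auto
      show ?thesis unfolding eq e by simp
    next
      case 3
      then have e: "{i \<in> {a, Suc a, b, Suc b}. j < i} = {}" using ab by auto
      show ?thesis unfolding eq e by simp
    qed
  qed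
qed

lemma sorted_prefix_pairs:
  assumes pa: "p \<le> a" and ab: "Suc a < b"
  shows "sorted_list_of_set ({..<p} \<union> {a, Suc a, b, Suc b}) = [0..<p] @ [a, Suc a, b, Suc b]"
proof -
  have "sorted_list_of_set (set ([0..<p] @ [a, Suc a, b, Suc b])) = [0..<p] @ [a, Suc a, b, Suc b]"
    by (rule sorted_list_of_set_sort_remdups[THEN trans])
      (use pa ab in \<open>auto simp: sorted_wrt_append distinct_remdups_id intro!: sorted_sort_id\<close>)
  moreover have "set ([0..<p] @ [a, Suc a, b, Suc b]) = {..<p} \<union> {a, Suc a, b, Suc b}" by auto
  ultimately show ?thesis by metis
qed

lemma det_prefix:
  fixes N :: "'a::idom mat"
  assumes N: "N \<in> carrier_mat n m" and idN: "\<forall>i<n. \<forall>k<n. N $$ (i,k) = (if i = k then 1 else 0)"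
    and n: "n = p + 4" and pa: "p \<le> a" and ab: "Suc a < b" and bm: "Suc b < m"
  shows "det (col_submat N ({..<p} \<union> {a, Suc a, b, Suc b})) =
         det (mat 4 4 (\<lambda>(r,c). N $$ (p + r, [a, Suc a, b, Suc b] ! c)))"
proof -
  define l where "l = [a, Suc a, b, Suc b]"
  define S where "S = {..<p} \<union> {a, Suc a, b, Suc b}"
  have sl: "sorted_list_of_set S = [0..<p] @ l" unfolding S_def l_def by (rule sorted_prefix_pairs[OF pa ab])
  have cS: "card S = p + 4" unfolding S_def using pa ab by (subst card_Un_disjoint) auto
  define B where "B = mat p 4 (\<lambda>(r,c). N $$ (r, l ! c))"
  define C where "C = mat 4 4 (\<lambda>(r,c). N $$ (p + r, l ! c))"
  have eq: "col_submat N S = four_block_mat (1\<^sub>m p) B (0\<^sub>m 4 p) C"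
  proof (rule eq_matI)
    fix i k assume i: "i < dim_row (four_block_mat (1\<^sub>m p) B (0\<^sub>m 4 p) C)"
      and k: "k < dim_col (four_block_mat (1\<^sub>m p) B (0\<^sub>m 4 p) C)"
    have i': "i < p + 4" and k': "k < p + 4" using i k unfolding B_def C_def by auto
    have lk: "([0..<p] @ l) ! k = (if k < p then k else l ! (k - p))"
      by (simp add: nth_append)
    have lk4: "k - p < 4" using k' by simp
    have lkn: "l ! (k - p) < m" using lk4 ab bm unfolding l_def
      by (cases "k - p") (auto simp: less_Suc_eq numeral_eq_Suc)
    show "col_submat N S $$ (i, k) = four_block_mat (1\<^sub>m p) B (0\<^sub>m 4 p) C $$ (i, k)"
      unfolding col_submat_def sl using i' k' N idN n lk lkn
      by (auto simp: B_def C_def cS)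
  qed (use N n cS in \<open>auto simp: col_submat_def B_def C_def\<close>)
  have "det (col_submat N S) = det (1\<^sub>m p) * det C"
    unfolding eq by (rule det_four_block_mat_lower_left_zero) (auto simp: B_def C_def)
  then show ?thesis unfolding S_def C_def l_def by simp
qed

lemma sorted_nth_in:
  assumes "finite S" "k < card S"
  shows "sorted_list_of_set S ! k \<in> S"
  using assms by (metis length_sorted_list_of_set nth_mem set_sorted_list_of_set)

lemma col_submat_carrier: "col_submat A S \<in> carrier_mat (dim_row A) (card S)"
  unfolding col_submat_def by simp

lemma col_submat_mult:
  assumes A: "A \<in> carrier_mat nr n" and B: "B \<in> carrier_mat n m" and S: "S \<subseteq> {..<m}"
  shows "col_submat (A * B) S = A * col_submat B S"
proof -
  have fin: "finite S" using S finite_subset by blast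
  show ?thesis
  proof (rule eq_matI)
    fix i k assume i: "i < dim_row (A * col_submat B S)" and k: "k < dim_col (A * col_submat B S)"
    have k': "k < card S" using k by (simp add: col_submat_def)
    have sk: "sorted_list_of_set S ! k < m" using sorted_nth_in[OF fin k'] S by auto
    show "col_submat (A * B) S $$ (i, k) = (A * col_submat B S) $$ (i, k)"
      using i k' sk A B unfolding col_submat_def
      by (simp add: scalar_prod_def)
  qed (use A B in \<open>auto simp: col_submat_def\<close>)
qed

lemma col_submat_map:
  assumes S: "S \<subseteq> {..<dim_col A}"
  shows "col_submat (map_mat f A) S = map_mat f (col_submat A S)"
proof -
  have fin: "finite S" using S finite_subset by blast
  show ?thesis
  proof (rule eq_matI)
    fix i k assume i: "i < dim_row (map_mat f (col_submat A S))" and k: "k < dim_col (map_mat f (col_submat A S))"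
    have k': "k < card S" using k by (simp add: col_submat_def)
    have sk: "sorted_list_of_set S ! k < dim_col A" using sorted_nth_in[OF fin k'] S by auto
    show "col_submat (map_mat f A) S $$ (i, k) = map_mat f (col_submat A S) $$ (i, k)"
      using i k' sk unfolding col_submat_def by simp
  qed (auto simp: col_submat_def)
qed

lemma col_submat_prefix:
  "k < n \<Longrightarrow> i < dim_row A \<Longrightarrow> col_submat A {..<n} $$ (i,k) = A $$ (i,k)"
  unfolding col_submat_def by (simp add: lessThan_atLeast0)

lemma no_real_char_big:
  fixes N :: "bit mat"
  assumes mono: "strict_mono_on {..<m} t" and n4: "4 \<le> n" and nm: "n + 4 \<le> m"
    and N: "N \<in> carrier_mat n m" and idN: "\<forall>i<n. \<forall>k<n. N $$ (i,k) = (if i = k then 1 else 0)"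
    and fac: "\<forall>S. cyclic_facet n m t S \<longrightarrow> det (col_submat N S) = 1"
  shows False
proof -
  define p where "p = n - 4"
  have np: "n = p + 4" using n4 unfolding p_def by simp
  define q where "q r c = N $$ (p + r, n + c)" for r c
  have g0: "det (locm q [a, a+1, b, b+1]) = 1" if ab: "a + 2 \<le> b" and b6: "b \<le> 6" for a b
  proof -
    have pa: "p \<le> p + a" and ab': "Suc (p + a) < p + b" and bm: "Suc (p + b) < m"
      using ab b6 nm np by auto
    have "det (col_submat N ({..<p} \<union> {p + a, Suc (p + a), p + b, Suc (p + b)})) = 1"
      using fac facet_pairs[OF mono np pa ab' bm] by blast
    moreover have "det (col_submat N ({..<p} \<union> {p + a, Suc (p + a), p + b, Suc (p + b)})) =
         det (mat 4 4 (\<lambda>(r,c). N $$ (p + r, [p + a, Suc (p + a), p + b, Suc (p + b)] ! c)))"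
      by (rule det_prefix[OF N idN np pa ab' bm])
    moreover have "mat 4 4 (\<lambda>(r,c). N $$ (p + r, [p + a, Suc (p + a), p + b, Suc (p + b)] ! c)) =
                   locm q [a, a+1, b, b+1]"
    proof (rule eq_matI)
      fix r c assume r: "r < dim_row (locm q [a, a+1, b, b+1])" and c: "c < dim_col (locm q [a, a+1, b, b+1])"
      have r4: "r < 4" and c4: "c < 4" using r c unfolding locm_def by auto
      define x where "x = [a, a+1, b, b+1] ! c"
      have gx: "[p + a, Suc (p + a), p + b, Suc (p + b)] ! c = p + x"
        unfolding x_def using c4 by (cases c) (auto simp: less_Suc_eq numeral_eq_Suc)
      have x8: "x < 8" unfolding x_def using c4 ab b6 by (cases c) (auto simp: less_Suc_eq numeral_eq_Suc)
      have "N $$ (p + r, p + x) = (if x < 4 then (if r = x then 1 else 0) else q r (x - 4))"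
      proof (cases "x < 4")
        case True then show ?thesis using idN r4 np by auto
      next
        case False
        then have "p + x = n + (x - 4)" using np by simp
        then show ?thesis using False unfolding q_def by simp
      qed
      then show "mat 4 4 (\<lambda>(r,c). N $$ (p + r, [p + a, Suc (p + a), p + b, Suc (p + b)] ! c)) $$ (r, c) =
                 locm q [a, a+1, b, b+1] $$ (r, c)"
        using r4 c4 gx unfolding locm_def x_def by simp
    qed (auto simp: locm_def)
    ultimately show ?thesis by simp
  qed
  have g: "det (locm q T) = 1" if "T = [a, a+1, b, b+1]" "a + 2 \<le> b" "b \<le> 6" for T a b
    using g0[of a b] that by simp
  have "\<forall>T\<in>set [[0,1,3,4], [0,1,4,5], [0,1,5,6], [0,1,6,7], [1,2,3,4], [1,2,4,5], [1,2,5,6], [1,2,6,7], [2,3,4,5], [2,3,5,6], [2,3,6,7], [3,4,5,6], [3,4,6,7], [4,5,6,7]]. det (locm q T) = 1"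
    using g[of "[0,1,3,4]" 0 3] g[of "[0,1,4,5]" 0 4] g[of "[0,1,5,6]" 0 5] g[of "[0,1,6,7]" 0 6]
      g[of "[1,2,3,4]" 1 3] g[of "[1,2,4,5]" 1 4] g[of "[1,2,5,6]" 1 5] g[of "[1,2,6,7]" 1 6]
      g[of "[2,3,4,5]" 2 4] g[of "[2,3,5,6]" 2 5] g[of "[2,3,6,7]" 2 6]
      g[of "[3,4,5,6]" 3 5] g[of "[3,4,6,7]" 3 6] g[of "[4,5,6,7]" 4 6]
    by simp
  then show False by (rule sat_core)
qed

lemma lift_small:
  fixes N :: "bit mat" and U :: "int mat"
  assumes small: "n \<le> 3 \<or> m \<le> n + 3"
    and N: "N \<in> carrier_mat n m" and idN: "\<forall>i<n. \<forall>k<n. N $$ (i,k) = (if i = k then 1 else 0)"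
    and fac: "\<forall>S. cyclic_facet n m t S \<longrightarrow> det (col_submat N S) = 1"
    and U: "U \<in> carrier_mat n n" and dU: "\<bar>det U\<bar> = 1"
  shows "char_matrix n m t (U * map_mat (\<lambda>b. if b = 1 then 1 else 0) N)"
proof -
  define M :: "int mat" where "M = map_mat (\<lambda>b. if b = 1 then 1 else 0) N"
  have M: "M \<in> carrier_mat n m" using N unfolding M_def by simp
  have mM: "map_mat of_int M = N" using N unfolding M_def by (intro eq_matI) auto
  have "det (col_submat (U * M) S) \<in> {1, -1}" if S: "cyclic_facet n m t S" for S
  proof -
    have Ssub: "S \<subseteq> {..<m}" and cS: "card S = n" using S unfolding cyclic_facet_def by auto
    have fin: "finite S" using Ssub finite_subset by blast
    define MS where "MS = col_submat M S"
    have MS: "MS \<in> carrier_mat n n" unfolding MS_def using col_submat_carrier[of M S] M cS by simp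
    have "col_submat (U * M) S = U * MS" unfolding MS_def by (rule col_submat_mult[OF U M Ssub])
    then have dUM: "det (col_submat (U * M) S) = det U * det MS" using det_mult[OF U MS] by simp
    have "of_int (det MS) = det (map_mat (of_int :: int \<Rightarrow> bit) MS)" by simp
    also have "map_mat (of_int :: int \<Rightarrow> bit) MS = col_submat N S"
      unfolding MS_def using col_submat_map[of S M "of_int :: int \<Rightarrow> bit"] Ssub M mM by simp
    finally have "(of_int (det MS) :: bit) = 1" using fac S by simp
    then have odd: "odd (det MS)" unfolding of_int_bit by (auto split: if_splits)
    define s where "s k = sorted_list_of_set S ! k" for k
    have sS: "s k \<in> S" if "k < n" for k using sorted_nth_in[OF fin] that cS unfolding s_def by simp
    have MSe: "MS $$ (i,k) = M $$ (i, s k)" if "i < n" "k < n" for i k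
      unfolding MS_def col_submat_def s_def using that M cS by simp
    have e01: "\<forall>i<n. \<forall>j<n. MS $$ (i,j) \<in> {0,1}"
    proof (intro allI impI)
      fix i j assume i: "i < n" and j: "j < n"
      then have "s j < m" using sS Ssub by auto
      then show "MS $$ (i,j) \<in> {0,1}" using MSe[OF i j] N i unfolding M_def by simp
    qed
    have sub: "{j. j < n \<and> \<not> sparse_col MS n j} \<subseteq> {j. j < n \<and> n \<le> s j}"
    proof
      fix j assume j: "j \<in> {j. j < n \<and> \<not> sparse_col MS n j}"
      have "n \<le> s j"
      proof (rule ccontr)
        assume "\<not> n \<le> s j"
        then have "s j < n" by simp
        then have "\<forall>i<n. MS $$ (i,j) = (if i = s j then 1 else 0)"
        proof (intro allI impI)
          fix i assume i: "i < n" and sj: "s j < n"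
          have "s j < m" using sS[of j] j Ssub by auto
          then show "MS $$ (i,j) = (if i = s j then 1 else 0)"
            using MSe[OF i] j idN N i sj unfolding M_def by simp
        qed
        then have "sparse_col MS n j" unfolding sparse_col_def by auto
        then show False using j by simp
      qed
      then show "j \<in> {j. j < n \<and> n \<le> s j}" using j by simp
    qed
    have c3: "card {j. j < n \<and> n \<le> s j} \<le> 3"
    proof (cases "n \<le> 3")
      case True
      have "card {j. j < n \<and> n \<le> s j} \<le> card {..<n}" by (rule card_mono) auto
      then show ?thesis using True by simp
    next
      case False
      then have m3: "m \<le> n + 3" using small by simp
      have inj: "inj_on s {j. j < n \<and> n \<le> s j}"
      proof -
        have "distinct (sorted_list_of_set S)" by simp
        then show ?thesis unfolding inj_on_def s_def using cS
          by (auto simp: nth_eq_iff_index_eq)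
      qed
      have "s ` {j. j < n \<and> n \<le> s j} \<subseteq> {n..<m}" using sS Ssub by fastforce
      then have "card {j. j < n \<and> n \<le> s j} \<le> card {n..<m}"
        by (rule card_inj_on_le[OF inj]) simp
      then show ?thesis using m3 by simp
    qed
    have "card {j. j < n \<and> \<not> sparse_col MS n j} \<le> 3"
    proof -
      have "finite {j. j < n \<and> n \<le> s j}" by simp
      then show ?thesis using card_mono[OF _ sub] c3 by linarith
    qed
    then have b2: "\<bar>det MS\<bar> \<le> 2" using det_sparse_bound_aux[of n] MS e01 by blast
    have "det MS \<in> {1, -1}"
    proof -
      have "det MS \<noteq> 0" "det MS \<noteq> 2" "det MS \<noteq> -2" using odd by auto
      then show ?thesis using b2 by auto
    qed
    moreover have "det U \<in> {1, -1}" using dU by auto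
    ultimately show ?thesis unfolding dUM by auto
  qed
  then show ?thesis unfolding char_matrix_def M_def[symmetric] using U M by auto
qed

theorem corollary1p6:
  fixes n m :: nat and t :: "nat \<Rightarrow> real" and L :: "bit mat"
  assumes "2 \<le> n" and "n < m"
    and "strict_mono_on {..<m} t"
    and "real_char_matrix n m t L"
  shows "\<exists>L' :: int mat. char_matrix n m t L' \<and> mod2_reduction L' = L"
proof -
  note mono = assms(3)
  have Lc: "L \<in> carrier_mat n m" using assms(4) unfolding real_char_matrix_def by auto
  have facL: "\<forall>S. cyclic_facet n m t S \<longrightarrow> det (col_submat L S) = 1"
    using assms(4) unfolding real_char_matrix_def by auto
  have Bfac: "cyclic_facet n m t {..<n}"
  proof (rule gale_even_facet[OF mono])
    show "{..<n} \<subseteq> {..<m}" using assms(2) by auto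
    show "card {..<n} = n" by simp
    show "\<forall>j\<in>{..<m} - {..<n}. even (card {i \<in> {..<n}. j < i})"
    proof
      fix j assume "j \<in> {..<m} - {..<n}"
      then have e: "{i \<in> {..<n}. j < i} = {}" by auto
      show "even (card {i \<in> {..<n}. j < i})" unfolding e by simp
    qed
  qed
  define X where "X = col_submat L {..<n}"
  have X: "X \<in> carrier_mat n n" unfolding X_def using col_submat_carrier[of L "{..<n}"] Lc by simp
  have dX: "det X = 1" unfolding X_def using facL Bfac by blast
  define A where "A = adj_mat X"
  have A: "A \<in> carrier_mat n n" unfolding A_def by (rule adj_mat(1)[OF X])
  have XA: "X * A = 1\<^sub>m n" unfolding A_def using adj_mat(2)[OF X] dX by (auto intro!: eq_matI)
  have AX: "A * X = 1\<^sub>m n" unfolding A_def using adj_mat(3)[OF X] dX by (auto intro!: eq_matI)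
  have dA: "det A = 1"
  proof -
    have "det X * det A = 1" using det_mult[OF X A] XA by simp
    then show ?thesis using dX by simp
  qed
  define N where "N = A * L"
  have N: "N \<in> carrier_mat n m" unfolding N_def using A Lc by simp
  have idN: "\<forall>i<n. \<forall>k<n. N $$ (i,k) = (if i = k then 1 else 0)"
  proof (intro allI impI)
    fix i k assume i: "i < n" and k: "k < n"
    have "col_submat N {..<n} = A * X" unfolding N_def X_def
      by (rule col_submat_mult[OF A Lc]) (use assms(2) in auto)
    then have "col_submat N {..<n} $$ (i,k) = 1\<^sub>m n $$ (i,k)" using AX by simp
    then show "N $$ (i,k) = (if i = k then 1 else 0)" using col_submat_prefix[OF k, of i N] i k N by simp
  qed
  have facN: "\<forall>S. cyclic_facet n m t S \<longrightarrow> det (col_submat N S) = 1"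
  proof (intro allI impI)
    fix S assume S: "cyclic_facet n m t S"
    then have Ssub: "S \<subseteq> {..<m}" and cS: "card S = n" unfolding cyclic_facet_def by auto
    have "col_submat N S = A * col_submat L S" unfolding N_def by (rule col_submat_mult[OF A Lc Ssub])
    moreover have "col_submat L S \<in> carrier_mat n n" using col_submat_carrier[of L S] Lc cS by simp
    ultimately have "det (col_submat N S) = det A * det (col_submat L S)" using det_mult[OF A] by simp
    then show "det (col_submat N S) = 1" using dA facL S by simp
  qed
  show ?thesis
  proof (cases "4 \<le> n \<and> n + 4 \<le> m")
    case True
    then have False using no_real_char_big[OF mono _ _ N idN facN] by blast
    then show ?thesis ..
  next
    case False
    then have small: "n \<le> 3 \<or> m \<le> n + 3" by auto
    obtain U where U: "U \<in> carrier_mat n n" "\<bar>det U\<bar> = 1" "map_mat of_int U = X"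
      using unimodular_lift[OF X dX] by blast
    define M :: "int mat" where "M = map_mat (\<lambda>b. if b = 1 then 1 else 0) N"
    have M: "M \<in> carrier_mat n m" using N unfolding M_def by simp
    have mM: "map_mat of_int M = N" using N unfolding M_def by (intro eq_matI) auto
    have "char_matrix n m t (U * M)" unfolding M_def by (rule lift_small[OF small N idN facN U(1) U(2)])
    moreover have "mod2_reduction (U * M) = L"
    proof -
      have "mod2_reduction (U * M) = map_mat of_int U * map_mat of_int M"
        unfolding mod2_reduction_def by (rule of_int_hom.mat_hom_mult[OF U(1) M])
      also have "\<dots> = X * (A * L)" using U mM unfolding N_def by simp
      also have "\<dots> = (X * A) * L" using X A Lc by (simp add: assoc_mult_mat)
      also have "\<dots> = L" using XA Lc by simp
      finally show ?thesis .
    qed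
    ultimately show ?thesis by blast
  qed
qed

end
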